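(* Let $\psi_\pm(x)=\frac{5\pm\sqrt{25-4x}}{2}$ and $\Psi(x)=\frac32\lim_{l\to\infty}5^l\psi_-^{\,l}(x)$. Let $E$ be the set consisting of the empty sequence $\emptyset$ together with all finite sequences $e=(e_1,\dots,e_N)$, $N\ge1$, with $e_j\in\{+,-\}$ and $e_1=+$; write $|e|$ for the length and $\psi_e=\psi_{e_1}\circ\cdots\circ\psi_{e_{|e|}}$, $\psi_\emptyset=\mathrm{id}$. Fix an integer $m_0$ and an initial value $\lambda_{m_0}\in\{2,5,6\}$, and define for $e\in E$ $$\lambda_e=5^{|e|+m_0}\,\Psi(\psi_e(\lambda_{m_0}))\ \text{ if }\lambda_{m_0}\in\{2,5\},\qquad \lambda_e=5^{|e|+m_0+1}\,\Psi(\psi_e(3))\ \text{ if }\lambda_{m_0}=6,$$ and the counting function $\rho_{m_0}(x)=\#\{e\in E:\lambda_e\le x\}$ for $x>0$. Then there exists a continuous, $\log 5$-periodic function $g:\mathbb{R}\to\mathbb{R}$ such that $$\lim_{x\to\infty}\left(\frac{\rho_{m_0}(x)}{x^{\log2/\log5}}-g(\log x)\right)=0.$$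
   Context: These $\lambda_e$ are exactly the eigenvalues of the Laplacian on the Sierpinski gasket (or on the infinite Sierpinski gasket) of eigenfunctions obtained by spectral decimation from a fixed generation of birth $m_0$ and a fixed initial eigenfunction with initial eigenvalue $\lambda_{m_0}$; each such eigenvalue corresponds to a unique eigenfunction extending the fixed initial one. *)

theory Defs
  imports Complex_Main
begin

definition psi_plus :: "real \<Rightarrow> real" where
  "psi_plus x = (5 + sqrt (25 - 4 * x)) / 2"

definition psi_minus :: "real \<Rightarrow> real" where
  "psi_minus x = (5 - sqrt (25 - 4 * x)) / 2"

definition Psi :: "real \<Rightarrow> real" where
  "Psi x = 3 / 2 * lim (\<lambda>l::nat. 5 ^ l * (psi_minus ^^ l) x)"

text \<open>Signs: True = +, False = -.\<close>
definition psi_sign :: "bool \<Rightarrow> real \<Rightarrow> real" where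
  "psi_sign s = (if s then psi_plus else psi_minus)"

definition psi_seq :: "bool list \<Rightarrow> real \<Rightarrow> real" where
  "psi_seq e = foldr (\<lambda>s f. psi_sign s \<circ> f) e id"

definition E_set :: "bool list set" where
  "E_set = {e. e = [] \<or> hd e = True}"

definition lambda_e :: "int \<Rightarrow> real \<Rightarrow> bool list \<Rightarrow> real" where
  "lambda_e m0 lam0 e =
     (if lam0 = 6 then 5 powr (real_of_int (int (length e) + m0 + 1)) * Psi (psi_seq e 3)
      else 5 powr (real_of_int (int (length e) + m0)) * Psi (psi_seq e lam0))"

definition rho :: "int \<Rightarrow> real \<Rightarrow> real \<Rightarrow> nat" where
  "rho m0 lam0 x = card {e \<in> E_set. lambda_e m0 lam0 e \<le> x}"

end

theory Submission
  imports Defs "HOL-Analysis.Analysis" "HOL-Real_Asymp.Real_Asymp"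
begin

lemma pm_mono: "x \<le> y \<Longrightarrow> psi_minus x \<le> psi_minus y"
  unfolding psi_minus_def by simp

lemma pp_anti: "x \<le> y \<Longrightarrow> psi_plus y \<le> psi_plus x"
  unfolding psi_plus_def by simp

lemma pm_inj: "psi_minus x = psi_minus y \<Longrightarrow> x = y"
  unfolding psi_minus_def by simp

lemma pp_inj: "psi_plus x = psi_plus y \<Longrightarrow> x = y"
  unfolding psi_plus_def by simp

lemma sqrt_bnds: assumes "0 \<le> x" "x \<le> 25/4" shows "0 \<le> sqrt (25 - 4*x)" "sqrt (25 - 4*x) \<le> 5"
proof -
  show "0 \<le> sqrt (25 - 4*x)" using assms by simp
  show "sqrt (25 - 4*x) \<le> 5" by (rule real_le_lsqrt) (use assms in auto)
qed

lemma pm_range: assumes "0 \<le> x" "x \<le> 25/4" shows "0 \<le> psi_minus x" "psi_minus x \<le> 5/2"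
  using sqrt_bnds[OF assms] unfolding psi_minus_def by auto

lemma pp_range: assumes "0 \<le> x" "x \<le> 25/4" shows "5/2 \<le> psi_plus x" "psi_plus x \<le> 5"
  using sqrt_bnds[OF assms] unfolding psi_plus_def by auto

lemma pm_lt: assumes "x < 25/4" shows "psi_minus x < 5/2"
  using assms unfolding psi_minus_def by simp

lemma pp_gt: assumes "x < 25/4" shows "psi_plus x > 5/2"
  using assms unfolding psi_plus_def by simp

lemma pp_ge3: assumes "x \<le> 5" shows "3 \<le> psi_plus x"
proof -
  have "sqrt 1 \<le> sqrt (25 - 4*x)" using assms by simp
  thus ?thesis unfolding psi_plus_def by simp
qed

lemma pm_pos: assumes "0 < x" shows "0 < psi_minus x"
proof -
  have "sqrt (25 - 4*x) < 5" by (rule real_less_lsqrt) (use assms in auto)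
  thus ?thesis unfolding psi_minus_def by simp
qed

lemma pm_ge: assumes "0 \<le> x" "x \<le> 25/4" shows "x \<le> 5 * psi_minus x"
proof -
  have "sqrt (25 - 4*x) \<le> (25 - 2*x)/5"
    apply (rule real_le_lsqrt) using assms by (auto simp: power2_eq_square field_simps)
  thus ?thesis unfolding psi_minus_def by simp
qed

lemma pm_recip: assumes "0 < y" "y \<le> 25/4" shows "1/y - 2/25 \<le> 1/(5 * psi_minus y)"
proof -
  define r where "r = sqrt (25 - 4*y)"
  have r2: "r^2 = 25 - 4*y" using assms unfolding r_def by simp
  have r5: "r < 5" unfolding r_def by (rule real_less_lsqrt) (use assms in auto)
  have rge: "5 - 4*y/5 \<le> r" unfolding r_def
    apply (rule real_le_rsqrt) using assms by (auto simp: power2_eq_square field_simps)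
  have pmv: "5 * psi_minus y = 5*(5 - r)/2" unfolding psi_minus_def r_def by simp
  have pos: "5 - r > 0" using r5 by simp
  have "(5 - r) * (5 + r) = 4*y" using r2 by (simp add: algebra_simps power2_eq_square)
  hence eq: "1/(5 * psi_minus y) = (5 + r)/(10*y)" unfolding pmv using pos assms
    by (simp add: field_simps)
  have "0 \<le> y * (25*r + 20*y - 125)" using assms rge by (intro mult_nonneg_nonneg) auto
  then show ?thesis unfolding eq using assms rge
    by (simp add: field_simps algebra_simps)
qed

lemma pm_expand: assumes "0 \<le> a" "a \<le> b" "b \<le> 25/4" shows "b - a \<le> 5 * (psi_minus b - psi_minus a)"
proof -
  define P where "P = sqrt (25 - 4*a)"
  define Q where "Q = sqrt (25 - 4*b)"
  have P2: "P^2 = 25 - 4*a" using assms unfolding P_def by simp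
  have Q2: "Q^2 = 25 - 4*b" using assms unfolding Q_def by simp
  have "P \<le> 5" "Q \<le> 5" "Q \<ge> 0" using sqrt_bnds[of a] sqrt_bnds[of b] assms unfolding P_def Q_def by auto
  have QP: "Q \<le> P" unfolding P_def Q_def using assms by simp
  have e: "(P - Q) * (P + Q) = 4*(b-a)" using P2 Q2 by (simp add: algebra_simps power2_eq_square)
  have "(P - Q) * (P + Q) \<le> (P - Q) * 10"
    apply (rule mult_left_mono) using \<open>P \<le> 5\<close> \<open>Q \<le> 5\<close> QP by auto
  hence "4*(b-a) \<le> (P-Q)*10" using e by simp
  moreover have "psi_minus b - psi_minus a = (P - Q)/2" unfolding psi_minus_def P_def Q_def by (simp add: field_simps)
  ultimately show ?thesis by simp
qed

definition sq :: "nat \<Rightarrow> real \<Rightarrow> real" where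
  "sq l x = 5^l * (psi_minus ^^ l) x"

lemma it_range: assumes "0 < x" "x \<le> 25/4"
  shows "0 < (psi_minus ^^ l) x \<and> (psi_minus ^^ l) x \<le> 25/4"
proof (induction l)
  case 0 then show ?case using assms by simp
next
  case (Suc l)
  then show ?case using pm_pos[of "(psi_minus ^^ l) x"] pm_range[of "(psi_minus ^^ l) x"] by auto
qed

lemma sq_Suc: "sq (Suc l) x = 5^l * (5 * psi_minus ((psi_minus ^^ l) x))"
  unfolding sq_def by simp

lemma sq_incr: assumes "0 < x" "x \<le> 25/4" shows "sq l x \<le> sq (Suc l) x"
proof -
  have "(psi_minus ^^ l) x \<le> 5 * psi_minus ((psi_minus ^^ l) x)"
    using pm_ge it_range[OF assms, of l] by auto
  then show ?thesis unfolding sq_Suc by (simp add: sq_def)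
qed

lemma sq_pos: assumes "0 < x" "x \<le> 25/4" shows "0 < sq l x"
  using it_range[OF assms, of l] unfolding sq_def by simp

lemma lin_aux: "q*c \<le> B \<Longrightarrow> q*c = A - 2/25*q \<Longrightarrow> Z = X - 1/10 + q/50 \<Longrightarrow> X - 1/10*(1-q) \<le> A \<Longrightarrow> Z \<le> (B::real)"
  by (simp add: field_simps)

lemma sq_recip: assumes "0 < x" "x \<le> 25/4"
  shows "1/x - (1/10)*(1 - (1/5)^l) \<le> 1/sq l x"
proof (induction l)
  case 0 then show ?case by (simp add: sq_def)
next
  case (Suc l)
  define y where "y = (psi_minus ^^ l) x"
  have y: "0 < y" "y \<le> 25/4" using it_range[OF assms, of l] unfolding y_def by auto
  have sl: "sq l x = 5^l * y" unfolding sq_def y_def ..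
  have "1/sq (Suc l) x = (1/5)^l * (1/(5 * psi_minus y))"
    unfolding sq_Suc y_def[symmetric] by (simp add: power_one_over)
  also have "\<dots> \<ge> (1/5)^l * (1/y - 2/25)"
    by (rule mult_left_mono) (use pm_recip[OF y] in auto)
  finally have "(1/5)^l * (1/y - 2/25) \<le> 1/sq (Suc l) x" .
  moreover have "(1/5)^l * (1/y - 2/25) = 1/sq l x - (2/25)*(1/5)^l"
    unfolding sl using y by (simp add: field_simps power_one_over)
  moreover have "1/x - 1/10 * (1 - ((1::real)/5)^Suc l) = 1/x - 1/10 + (1/5)^l/50" by (simp add: field_simps)
  ultimately show ?case using Suc.IH lin_aux by metis
qed

lemma sq_bound: assumes "0 < x" "x \<le> 25/4" shows "sq l x \<le> 10*x/(10 - x)"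
proof -
  have "1/x - 1/10 \<le> 1/x - (1/10)*(1 - (1/5)^l)" by simp
  also have "\<dots> \<le> 1/sq l x" by (rule sq_recip[OF assms])
  finally have h: "1/x - 1/10 \<le> 1/sq l x" .
  have h2: "1/x - 1/10 = (10 - x)/(10*x)" using assms by (simp add: field_simps)
  have pos: "0 < (10 - x)/(10*x)" using assms by simp
  have "(10 - x)/(10*x) * sq l x \<le> 1" using h sq_pos[OF assms, of l] unfolding h2 by (simp add: le_divide_eq)
  thus ?thesis using assms by (simp add: field_simps)
qed

lemma sq_conv: assumes "0 < x" "x \<le> 25/4"
  shows "(\<lambda>l. sq l x) \<longlonglongrightarrow> (2/3) * Psi x"
proof -
  have inc: "incseq (\<lambda>l. sq l x)" using sq_incr[OF assms] by (simp add: incseq_SucI)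
  have bnd: "\<forall>i. sq i x \<le> 10*x/(10-x)" using sq_bound[OF assms] by auto
  obtain L where L: "(\<lambda>l. sq l x) \<longlonglongrightarrow> L" using incseq_convergent[OF inc bnd] by blast
  have "lim (\<lambda>l. 5 ^ l * (psi_minus ^^ l) x) = L" using L unfolding sq_def by (rule limI)
  then have "(2/3) * Psi x = L" unfolding Psi_def by simp
  then show ?thesis using L by simp
qed

lemma Psi_ge: assumes "0 < x" "x \<le> 25/4" shows "3/2 * x \<le> Psi x"
proof -
  have "sq 0 x \<le> (2/3) * Psi x"
    apply (rule LIMSEQ_le[OF tendsto_const sq_conv[OF assms]])
    using incseq_SucI[of "\<lambda>l. sq l x"] sq_incr[OF assms] by (auto simp: incseq_def)
  thus ?thesis by (simp add: sq_def)
qed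

lemma Psi_le: assumes "0 < x" "x \<le> 25/4" shows "Psi x \<le> 3/2 * (10*x/(10 - x))"
proof -
  have "(2/3) * Psi x \<le> 10*x/(10 - x)"
    by (rule LIMSEQ_le[OF sq_conv[OF assms] tendsto_const]) (use sq_bound[OF assms] in auto)
  thus ?thesis by simp
qed

lemma sq_diff: assumes "0 < x" "x \<le> y" "y \<le> 25/4" shows "y - x \<le> sq l y - sq l x"
proof (induction l)
  case 0 then show ?case by (simp add: sq_def)
next
  case (Suc l)
  define a where "a = (psi_minus ^^ l) x"
  define b where "b = (psi_minus ^^ l) y"
  have ab: "0 < a" "b \<le> 25/4" using it_range[of x l] it_range[of y l] assms unfolding a_def b_def by auto
  have "a \<le> b" unfolding a_def b_def
  proof (induction l)
    case (Suc l) then show ?case by (simp add: pm_mono)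
  qed (use assms in simp)
  have "5^l * (b - a) \<le> 5^l * (5 * (psi_minus b - psi_minus a))"
    by (rule mult_left_mono) (use pm_expand[of a b] ab \<open>a \<le> b\<close> in auto)
  moreover have "sq l y - sq l x = 5^l * (b - a)" unfolding sq_def a_def b_def by (simp add: algebra_simps)
  moreover have "sq (Suc l) y - sq (Suc l) x = 5^l * (5 * (psi_minus b - psi_minus a))"
    unfolding sq_Suc a_def b_def by (simp add: algebra_simps)
  ultimately show ?case using Suc.IH by linarith
qed

lemma Psi_diff: assumes "0 < x" "x \<le> y" "y \<le> 25/4" shows "3/2 * (y - x) \<le> Psi y - Psi x"
proof -
  have "y - x \<le> (2/3) * Psi y - (2/3) * Psi x"
    apply (rule LIMSEQ_le[OF tendsto_const tendsto_diff[OF sq_conv sq_conv]])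
    using assms sq_diff[OF assms] by auto
  thus ?thesis by simp
qed

lemma psi_seq_Nil[simp]: "psi_seq [] w = w"
  unfolding psi_seq_def by simp

lemma psi_seq_Cons[simp]: "psi_seq (s # f) w = psi_sign s (psi_seq f w)"
  unfolding psi_seq_def by simp

lemma u_range: assumes "0 \<le> w" "w \<le> 5" shows "0 \<le> psi_seq f w \<and> psi_seq f w \<le> 5"
proof (induction f)
  case Nil then show ?case using assms by simp
next
  case (Cons s f)
  then show ?case using pm_range[of "psi_seq f w"] pp_range[of "psi_seq f w"]
    by (cases s) (auto simp: psi_sign_def)
qed

lemma sign_side: assumes "x \<le> 5" shows "(5/2 < psi_sign s x) = s"
proof (cases s)
  case True then show ?thesis using pp_gt[of x] assms by (simp add: psi_sign_def)
next
  case False then show ?thesis using pm_lt[of x] assms by (simp add: psi_sign_def)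
qed

lemma u_inj: assumes "0 \<le> w" "w \<le> 5"
  shows "length f = length g \<Longrightarrow> psi_seq f w = psi_seq g w \<Longrightarrow> f = g"
proof (induction f arbitrary: g)
  case Nil then show ?case by simp
next
  case (Cons s f)
  obtain s' g' where g: "g = s' # g'" using Cons.prems(1) by (cases g) auto
  have r1: "psi_seq f w \<le> 5" "psi_seq g' w \<le> 5" using u_range[OF assms] by auto
  have ps: "psi_sign s (psi_seq f w) = psi_sign s' (psi_seq g' w)" using Cons.prems g by simp
  have ss: "s = s'" using sign_side[OF r1(1), of s] sign_side[OF r1(2), of s'] ps by metis
  have ps2: "psi_sign s (psi_seq f w) = psi_sign s (psi_seq g' w)" using ps ss by (simp only:)
  have "psi_seq f w = psi_seq g' w"
  proof (cases s)
    case True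
    then have "psi_plus (psi_seq f w) = psi_plus (psi_seq g' w)" using ps2 unfolding psi_sign_def by (simp only: if_True)
    then show ?thesis by (rule pp_inj)
  next
    case False
    then have "psi_minus (psi_seq f w) = psi_minus (psi_seq g' w)" using ps2 unfolding psi_sign_def by (simp only: if_False)
    then show ?thesis by (rule pm_inj)
  qed
  moreover have "length f = length g'" using Cons.prems g by simp
  ultimately have "f = g'" by (intro Cons.IH) auto
  then show ?case using g ss by simp
qed

lemma LN_finite: "finite {f::bool list. length f = n}"
  using finite_lists_length_eq[of "UNIV::bool set" n] by simp

lemma LN_card: "card {f::bool list. length f = n} = 2^n"
  using card_lists_length_eq[of "UNIV::bool set" n] by simp

definition A :: "real \<Rightarrow> nat \<Rightarrow> real set \<Rightarrow> nat" where
  "A w n S = card {f. length f = n \<and> psi_seq f w \<in> S}"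

lemma A_finite: "finite {f::bool list. length f = n \<and> P f}"
  by (rule finite_subset[OF _ LN_finite[of n]]) auto

lemma A_le: "A w n S \<le> 2^n"
  unfolding A_def LN_card[symmetric] by (rule card_mono[OF LN_finite]) auto

lemma A_Suc: "A w (Suc n) S = A w n (psi_minus -` S) + A w n (psi_plus -` S)"
proof -
  have eq: "{f. length f = Suc n \<and> psi_seq f w \<in> S} =
     Cons False ` {f. length f = n \<and> psi_seq f w \<in> psi_minus -` S} \<union>
     Cons True ` {f. length f = n \<and> psi_seq f w \<in> psi_plus -` S}"
    (is "?L = ?R")
  proof
    show "?L \<subseteq> ?R"
    proof
      fix f assume "f \<in> ?L"
      then obtain s g where f: "f = s # g" "length g = n" "psi_sign s (psi_seq g w) \<in> S"
        by (cases f) auto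
      then show "f \<in> ?R" by (cases s) (auto simp: psi_sign_def)
    qed
    show "?R \<subseteq> ?L" by (auto simp: psi_sign_def)
  qed
  show ?thesis unfolding A_def eq
    by (subst card_Un_disjoint) (auto intro!: A_finite finite_imageI simp: card_image)
qed

lemma A_cong: assumes "0 \<le> w" "w \<le> 5" "\<And>u. 0 \<le> u \<Longrightarrow> u \<le> 5 \<Longrightarrow> u \<in> S \<longleftrightarrow> u \<in> T"
  shows "A w n S = A w n T"
proof -
  have "{f. length f = n \<and> psi_seq f w \<in> S} = {f. length f = n \<and> psi_seq f w \<in> T}"
    using assms(3) u_range[OF assms(1,2)] by blast
  thus ?thesis unfolding A_def by simp
qed

lemma A_all: assumes "0 \<le> w" "w \<le> 5" "\<And>u. 0 \<le> u \<Longrightarrow> u \<le> 5 \<Longrightarrow> u \<in> S"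
  shows "A w n S = 2^n"
proof -
  have "A w n S = A w n UNIV" by (rule A_cong) (use assms in auto)
  also have "\<dots> = 2^n" unfolding A_def LN_card[symmetric] by simp
  finally show ?thesis .
qed

lemma A_none: assumes "0 \<le> w" "w \<le> 5" "\<And>u. 0 \<le> u \<Longrightarrow> u \<le> 5 \<Longrightarrow> u \<notin> S"
  shows "A w n S = 0"
proof -
  have "A w n S = A w n {}" by (rule A_cong) (use assms in auto)
  also have "\<dots> = 0" unfolding A_def by simp
  finally show ?thesis .
qed

definition updown :: "real set \<Rightarrow> bool" where
  "updown S \<longleftrightarrow> (\<forall>x y. x \<in> S \<longrightarrow> x \<le> y \<longrightarrow> y \<in> S) \<or> (\<forall>x y. x \<in> S \<longrightarrow> y \<le> x \<longrightarrow> y \<in> S)"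

lemma updown_pm: "updown S \<Longrightarrow> updown (psi_minus -` S)"
  unfolding updown_def using pm_mono by blast

lemma updown_pp: "updown S \<Longrightarrow> updown (psi_plus -` S)"
  unfolding updown_def using pp_anti by blast

lemma decomp: assumes "0 \<le> w" "w \<le> 5" "updown S"
  shows "\<exists>T c. updown T \<and> (c = 0 \<or> c = 1) \<and> (\<forall>n. A w (Suc n) S = c * 2^n + A w n T)"
proof -
  have pmr: "psi_minus u \<le> 5/2" and ppr: "5/2 \<le> psi_plus u" if "0 \<le> u" "u \<le> 5" for u
    using pm_range[of u] pp_range[of u] that by auto
  consider (up) "\<forall>x y. x \<in> S \<longrightarrow> x \<le> y \<longrightarrow> y \<in> S" | (down) "\<forall>x y. x \<in> S \<longrightarrow> y \<le> x \<longrightarrow> y \<in> S"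
    using assms(3) unfolding updown_def by blast
  then show ?thesis
  proof cases
    case up
    show ?thesis
    proof (cases "5/2 \<in> S")
      case True
      have "\<forall>n. A w (Suc n) S = 1 * 2^n + A w n (psi_minus -` S)"
        using A_all[OF assms(1,2), of "psi_plus -` S"] up True ppr unfolding A_Suc by fastforce
      then show ?thesis using updown_pm[OF assms(3)] by blast
    next
      case False
      have "\<forall>n. A w (Suc n) S = 0 * 2^n + A w n (psi_plus -` S)"
        using A_none[OF assms(1,2), of "psi_minus -` S"] up False pmr unfolding A_Suc by fastforce
      then show ?thesis using updown_pp[OF assms(3)] by blast
    qed
  next
    case down
    show ?thesis
    proof (cases "5/2 \<in> S")
      case True
      have "\<forall>n. A w (Suc n) S = 1 * 2^n + A w n (psi_plus -` S)"
        using A_all[OF assms(1,2), of "psi_minus -` S"] down True pmr unfolding A_Suc by fastforce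
      then show ?thesis using updown_pp[OF assms(3)] by blast
    next
      case False
      have "\<forall>n. A w (Suc n) S = 0 * 2^n + A w n (psi_minus -` S)"
        using A_none[OF assms(1,2), of "psi_plus -` S"] down False ppr unfolding A_Suc by fastforce
      then show ?thesis using updown_pm[OF assms(3)] by blast
    qed
  qed
qed

definition mu :: "real \<Rightarrow> nat \<Rightarrow> real set \<Rightarrow> real" where
  "mu w n S = real (A w n S) / 2^n"

lemma mu_bnd: "0 \<le> mu w n S \<and> mu w n S \<le> 1"
proof -
  have "real (A w n S) \<le> 2^n" using A_le[of w n S] by (simp add: of_nat_le_iff[symmetric])
  then show ?thesis unfolding mu_def by simp
qed

lemma contraction: assumes "0 \<le> w" "w \<le> 5"
  shows "\<forall>S. updown S \<longrightarrow> \<bar>mu w n S - mu w (Suc n) S\<bar> \<le> (1/2)^n"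
proof (induction n)
  case 0
  show ?case
  proof (intro allI impI)
    fix S
    show "\<bar>mu w 0 S - mu w (Suc 0) S\<bar> \<le> (1/2)^0" using mu_bnd[of w 0 S] mu_bnd[of w "Suc 0" S] by (simp add: abs_le_iff)
  qed
next
  case (Suc n)
  show ?case
  proof (intro allI impI)
    fix S assume S: "updown S"
    obtain T c where T: "updown T" "c = 0 \<or> c = 1" "\<forall>n. A w (Suc n) S = c * 2^n + A w n T"
      using decomp[OF assms S] by blast
    have m: "mu w (Suc k) S = c/2 + mu w k T / 2" for k
      unfolding mu_def using T(3) by (simp add: field_simps)
    have "mu w (Suc n) S - mu w (Suc (Suc n)) S = (mu w n T - mu w (Suc n) T) / 2"
      unfolding m by (simp add: field_simps)
    then have "\<bar>mu w (Suc n) S - mu w (Suc (Suc n)) S\<bar> = \<bar>mu w n T - mu w (Suc n) T\<bar> / 2"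
      by (simp only: abs_divide abs_numeral)
    also have "\<dots> \<le> (1/2)^n / 2" using Suc.IH T(1) by simp
    finally show "\<bar>mu w (Suc n) S - mu w (Suc (Suc n)) S\<bar> \<le> (1/2)^Suc n" by simp
  qed
qed

definition muL :: "real \<Rightarrow> real set \<Rightarrow> real" where
  "muL w S = mu w 0 S + (\<Sum>k. mu w (Suc k) S - mu w k S)"

lemma muL_approx: assumes "0 \<le> w" "w \<le> 5" "updown S"
  shows "\<bar>mu w n S - muL w S\<bar> \<le> 2 * (1/2)^n"
proof -
  define d where "d k = mu w (Suc k) S - mu w k S" for k
  have dk: "\<bar>d k\<bar> \<le> (1/2)^k" for k
    using contraction[OF assms(1,2), of k] assms(3) unfolding d_def by (simp add: abs_minus_commute)
  have sg: "summable (\<lambda>k. (1/2::real)^k)" by simp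
  have sd: "summable d" by (rule summable_comparison_test[OF _ sg]) (use dk in auto)
  have sdn: "summable (\<lambda>i. \<bar>d (i+n)\<bar>)"
    by (rule summable_comparison_test[OF _ summable_ignore_initial_segment[OF sg, of n]]) (use dk in auto)
  have mun: "mu w n S = mu w 0 S + (\<Sum>k<n. d k)"
    unfolding d_def using sum_lessThan_telescope[of "\<lambda>k. mu w k S" n] by simp
  have "muL w S - mu w n S = (\<Sum>i. d (i + n))"
    unfolding muL_def mun d_def[symmetric] using suminf_minus_initial_segment[OF sd, of n] by simp
  hence "\<bar>mu w n S - muL w S\<bar> = \<bar>\<Sum>i. d (i + n)\<bar>" by linarith
  also have "\<dots> \<le> (\<Sum>i. \<bar>d (i + n)\<bar>)" by (rule summable_rabs[OF sdn])
  also have "\<dots> \<le> (\<Sum>i. (1/2)^(i+n))"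
    by (rule suminf_le) (use dk sdn summable_ignore_initial_segment[OF sg, of n] in auto)
  also have "(\<Sum>i. (1/2::real)^(i+n)) = (1/2)^n * (\<Sum>i. (1/2)^i)"
    by (subst suminf_mult[symmetric]) (auto simp: power_add mult.commute)
  also have "\<dots> = 2 * (1/2)^n" by (simp add: suminf_geometric)
  finally show ?thesis .
qed

lemma muL_const: assumes "\<And>n. mu w n S = c" shows "muL w S = c"
  unfolding muL_def using assms by simp

definition clip :: "real \<Rightarrow> real" where "clip u = max 0 (min 5 u)"

definition hh :: "real \<Rightarrow> real" where "hh u = Psi (psi_plus (clip u))"

definition St :: "real \<Rightarrow> real set" where "St t = {u. hh u \<le> t}"

lemma clip_id: "0 \<le> u \<Longrightarrow> u \<le> 5 \<Longrightarrow> clip u = u"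
  unfolding clip_def by simp

lemma clip_range: "0 \<le> clip u \<and> clip u \<le> 5"
  unfolding clip_def by simp

lemma clip_mono: "u \<le> v \<Longrightarrow> clip u \<le> clip v"
  unfolding clip_def by simp

lemma ppc_range: "3 \<le> psi_plus (clip u) \<and> psi_plus (clip u) \<le> 5"
  using pp_ge3[of "clip u"] pp_range[of "clip u"] clip_range[of u] by auto

lemma hh_bounds: "9/2 \<le> hh u \<and> hh u \<le> 15"
proof -
  define x where "x = psi_plus (clip u)"
  have x: "3 \<le> x" "x \<le> 5" using ppc_range[of u] unfolding x_def by auto
  have "3/2 * x \<le> Psi x" by (rule Psi_ge) (use x in auto)
  moreover have "Psi x \<le> 3/2 * (10*x/(10 - x))" by (rule Psi_le) (use x in auto)
  moreover have "10*x/(10 - x) \<le> 10" using x by (simp add: field_simps)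
  ultimately show ?thesis unfolding hh_def x_def[symmetric] using x by auto
qed

lemma hh_mono: "u \<le> v \<Longrightarrow> hh v \<le> hh u"
proof -
  assume "u \<le> v"
  then have a: "psi_plus (clip v) \<le> psi_plus (clip u)" by (intro pp_anti clip_mono)
  have "3/2 * (psi_plus (clip u) - psi_plus (clip v)) \<le> Psi (psi_plus (clip u)) - Psi (psi_plus (clip v))"
    by (rule Psi_diff[OF _ a]) (use ppc_range[of u] ppc_range[of v] in auto)
  then show "hh v \<le> hh u" unfolding hh_def using a by (simp add: field_simps)
qed

lemma hh_inj: assumes "0 \<le> u" "u \<le> 5" "0 \<le> v" "v \<le> 5" "hh u = hh v" shows "u = v"
proof -
  define a where "a = psi_plus u"
  define b where "b = psi_plus v"
  have ra: "3 \<le> a \<and> a \<le> 5" using ppc_range[of u] clip_id[of u] assms unfolding a_def by auto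
  have rb: "3 \<le> b \<and> b \<le> 5" using ppc_range[of v] clip_id[of v] assms unfolding b_def by auto
  have e: "Psi a = Psi b" using assms clip_id[of u] clip_id[of v] unfolding hh_def a_def b_def by simp
  have "a = b"
  proof (rule ccontr)
    assume "a \<noteq> b"
    then consider "a < b" | "b < a" by linarith
    then show False
    proof cases
      case 1 then show False using Psi_diff[of a b] ra rb e by auto
    next
      case 2 then show False using Psi_diff[of b a] ra rb e by auto
    qed
  qed
  then show ?thesis unfolding a_def b_def by (rule pp_inj)
qed

lemma updown_St: "updown (St t)"
  unfolding updown_def
proof (intro disjI1 allI impI)
  fix x y assume "x \<in> St t" "x \<le> y"
  then show "y \<in> St t" using hh_mono[of x y] unfolding St_def by simp
qed

definition GN :: "real \<Rightarrow> nat \<Rightarrow> real \<Rightarrow> real" where "GN w n t = mu w n (St t)"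
definition GL :: "real \<Rightarrow> real \<Rightarrow> real" where "GL w t = muL w (St t)"

lemma GN_approx: assumes "0 \<le> w" "w \<le> 5" shows "\<bar>GN w n t - GL w t\<bar> \<le> 2 * (1/2)^n"
  unfolding GN_def GL_def by (rule muL_approx[OF assms updown_St])

lemma GN_zero: assumes "0 \<le> w" "w \<le> 5" "t < 9/2" shows "GN w n t = 0"
proof -
  have "u \<notin> St t" for u using hh_bounds[of u] assms(3) unfolding St_def by auto
  then have "A w n (St t) = 0" by (intro A_none[OF assms(1,2)]) auto
  thus ?thesis unfolding GN_def mu_def by simp
qed

lemma GN_one: assumes "0 \<le> w" "w \<le> 5" "15 \<le> t" shows "GN w n t = 1"
proof -
  have "u \<in> St t" for u using hh_bounds[of u] assms(3) unfolding St_def by auto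
  then have "A w n (St t) = 2^n" by (intro A_all[OF assms(1,2)]) auto
  thus ?thesis unfolding GN_def mu_def by simp
qed

lemma GL_zero: assumes "0 \<le> w" "w \<le> 5" "t < 9/2" shows "GL w t = 0"
  unfolding GL_def by (rule muL_const) (use GN_zero[OF assms] in \<open>simp add: GN_def\<close>)

lemma GL_one: assumes "0 \<le> w" "w \<le> 5" "15 \<le> t" shows "GL w t = 1"
  unfolding GL_def by (rule muL_const) (use GN_one[OF assms] in \<open>simp add: GN_def\<close>)

lemma GL_bnd: assumes "0 \<le> w" "w \<le> 5" shows "\<bar>GL w t\<bar> \<le> 3"
proof -
  have "\<bar>GN w 0 t - GL w t\<bar> \<le> 2" using GN_approx[OF assms, of 0 t] by simp
  moreover have "0 \<le> GN w 0 t \<and> GN w 0 t \<le> 1" unfolding GN_def by (rule mu_bnd)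
  ultimately show ?thesis by linarith
qed

lemma GN_jump: assumes "0 \<le> w" "w \<le> 5"
  shows "\<exists>d>0. \<forall>t. \<bar>t - t0\<bar> < d \<longrightarrow> \<bar>GN w n t - GN w n t0\<bar> \<le> (1/2)^n"
proof -
  define V where "V = (\<lambda>f. hh (psi_seq f w)) ` {f. length f = n}"
  have fV: "finite V" unfolding V_def using LN_finite by simp
  obtain d where d: "d > 0" "\<forall>v\<in>V. v \<noteq> t0 \<longrightarrow> d \<le> dist t0 v"
    using finite_set_avoid[OF fV, of t0] by blast
  define Sn where "Sn t = {f. length f = n \<and> psi_seq f w \<in> St t}" for t
  have fin: "finite (Sn t)" for t unfolding Sn_def by (rule A_finite)
  have AS: "A w n (St t) = card (Sn t)" for t unfolding A_def Sn_def ..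
  have key: "hh (psi_seq f w) = t0" if "length f = n" "\<bar>hh (psi_seq f w) - t0\<bar> < d" for f
  proof (rule ccontr)
    assume ne: "hh (psi_seq f w) \<noteq> t0"
    have "hh (psi_seq f w) \<in> V" unfolding V_def using that(1) by simp
    then have "d \<le> dist t0 (hh (psi_seq f w))" using d ne by blast
    then show False using that ne unfolding dist_real_def by auto
  qed
  have H: "\<bar>real (card (Sn t)) - real (card (Sn t0))\<bar> \<le> 1" if t: "\<bar>t - t0\<bar> < d" for t
  proof (cases "t0 \<le> t")
    case True
    have "Sn t = Sn t0"
    proof
      show "Sn t0 \<subseteq> Sn t" unfolding Sn_def St_def using True by auto
      show "Sn t \<subseteq> Sn t0"
      proof
        fix f assume f: "f \<in> Sn t"
        show "f \<in> Sn t0"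
        proof (rule ccontr)
          assume "f \<notin> Sn t0"
          then have "t0 < hh (psi_seq f w)" "length f = n" "hh (psi_seq f w) \<le> t" using f unfolding Sn_def St_def by auto
          then show False using key[of f] t by auto
        qed
      qed
    qed
    then show ?thesis by simp
  next
    case False
    have sub: "Sn t \<subseteq> Sn t0" unfolding Sn_def St_def using False by auto
    define E where "E = {f. length f = n \<and> hh (psi_seq f w) = t0}"
    have "Sn t0 \<subseteq> Sn t \<union> E"
    proof
      fix f assume f: "f \<in> Sn t0"
      show "f \<in> Sn t \<union> E"
      proof (cases "hh (psi_seq f w) \<le> t")
        case True then show ?thesis using f unfolding Sn_def St_def by auto
      next
        case False
        then have "hh (psi_seq f w) = t0" using key[of f] f t \<open>\<not> t0 \<le> t\<close> unfolding Sn_def St_def by auto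
        then show ?thesis using f unfolding E_def Sn_def by auto
      qed
    qed
    moreover have "card E \<le> 1"
    proof -
      have "finite E" unfolding E_def by (rule A_finite)
      moreover have "\<forall>a1\<in>E. \<forall>a2\<in>E. a1 = a2"
      proof (intro ballI)
        fix a1 a2 assume a: "a1 \<in> E" "a2 \<in> E"
        have "psi_seq a1 w = psi_seq a2 w"
          apply (rule hh_inj) using a u_range[OF assms, of a1] u_range[OF assms, of a2] unfolding E_def by auto
        then show "a1 = a2" using u_inj[OF assms] a unfolding E_def by auto
      qed
      ultimately show ?thesis using card_le_Suc0_iff_eq by auto
    qed
    moreover have "finite (Sn t \<union> E)" using fin unfolding E_def by (simp add: A_finite)
    ultimately have "card (Sn t0) \<le> card (Sn t) + 1"
      using card_mono[of "Sn t \<union> E" "Sn t0"] card_Un_le[of "Sn t" E] by linarith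
    moreover have "card (Sn t) \<le> card (Sn t0)" using card_mono[OF fin sub] .
    ultimately show ?thesis by linarith
  qed
  have "\<bar>GN w n t - GN w n t0\<bar> \<le> (1/2)^n" if t: "\<bar>t - t0\<bar> < d" for t
  proof -
    have "\<bar>GN w n t - GN w n t0\<bar> = \<bar>real (card (Sn t)) - real (card (Sn t0))\<bar> / 2^n"
      unfolding GN_def mu_def AS by (simp only: diff_divide_distrib[symmetric] abs_divide) simp
    also have "\<dots> \<le> 1 / 2^n" by (rule divide_right_mono[OF H[OF t]]) simp
    also have "\<dots> = (1/2)^n" by (simp add: power_one_over)
    finally show ?thesis .
  qed
  then show ?thesis using d(1) by blast
qed

lemma GL_cont: assumes "0 \<le> w" "w \<le> 5" shows "isCont (GL w) t0"
  unfolding continuous_at_eps_delta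
proof (intro allI impI)
  fix e :: real assume e: "e > 0"
  obtain n where n: "(1/2::real)^n < e/5" using real_arch_pow_inv[of "e/5" "1/2"] e by auto
  obtain d where d: "d > 0" "\<forall>t. \<bar>t - t0\<bar> < d \<longrightarrow> \<bar>GN w n t - GN w n t0\<bar> \<le> (1/2)^n"
    using GN_jump[OF assms] by blast
  show "\<exists>d>0. \<forall>x'. dist x' t0 < d \<longrightarrow> dist (GL w x') (GL w t0) < e"
  proof (intro exI conjI allI impI)
    fix t assume "dist t t0 < d"
    then have "\<bar>GN w n t - GN w n t0\<bar> \<le> (1/2)^n" using d unfolding dist_real_def by auto
    moreover have "\<bar>GN w n t - GL w t\<bar> \<le> 2 * (1/2)^n" "\<bar>GN w n t0 - GL w t0\<bar> \<le> 2 * (1/2)^n"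
      using GN_approx[OF assms] by auto
    ultimately show "dist (GL w t) (GL w t0) < e" unfolding dist_real_def using n by linarith
  qed (use d in auto)
qed

definition wv :: "real \<Rightarrow> real" where "wv lam0 = (if lam0 = 6 then 3 else lam0)"
definition Kc :: "int \<Rightarrow> real \<Rightarrow> real" where
  "Kc m0 lam0 = 5 powr (real_of_int m0 + (if lam0 = 6 then 1 else 0))"

lemma wv_range: "lam0 \<in> {2,5,6} \<Longrightarrow> 0 \<le> wv lam0 \<and> wv lam0 \<le> 5"
  unfolding wv_def by auto

lemma Kc_pos: "0 < Kc m0 lam0" unfolding Kc_def by simp

lemma lam_cons: assumes "lam0 \<in> {2,5,6}"
  shows "lambda_e m0 lam0 (True # f) = Kc m0 lam0 * 5^(Suc (length f)) * hh (psi_seq f (wv lam0))"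
proof -
  have r: "0 \<le> psi_seq f (wv lam0) \<and> psi_seq f (wv lam0) \<le> 5" using u_range wv_range[OF assms] by blast
  have h: "hh (psi_seq f (wv lam0)) = Psi (psi_seq (True # f) (wv lam0))"
    unfolding hh_def using clip_id r by (simp add: psi_sign_def)
  have p: "5 powr (real_of_int (int (length (True # f)) + m0 + c)) = 5^(Suc (length f)) * 5 powr (real_of_int m0 + c)" for c :: int
  proof -
    have "real_of_int (int (length (True # f)) + m0 + c) = real (Suc (length f)) + (real_of_int m0 + c)" by simp
    then show ?thesis by (simp only: powr_add powr_realpow)
  qed
  show ?thesis
  proof (cases "lam0 = 6")
    case True
    have "lambda_e m0 lam0 (True#f) = 5 powr (real_of_int (int (length (True # f)) + m0 + 1)) * Psi (psi_seq (True # f) (wv lam0))"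
      unfolding lambda_e_def wv_def using True by simp
    also have "\<dots> = 5^(Suc (length f)) * 5 powr (real_of_int m0 + 1) * hh (psi_seq f (wv lam0))"
      unfolding p[of 1] h by simp
    also have "\<dots> = Kc m0 lam0 * 5^(Suc (length f)) * hh (psi_seq f (wv lam0))"
      unfolding Kc_def using True by simp
    finally show ?thesis .
  next
    case False
    have "lambda_e m0 lam0 (True#f) = 5 powr (real_of_int (int (length (True # f)) + m0 + 0)) * Psi (psi_seq (True # f) (wv lam0))"
      unfolding lambda_e_def wv_def using False by simp
    also have "\<dots> = 5^(Suc (length f)) * 5 powr (real_of_int m0 + 0) * hh (psi_seq f (wv lam0))"
      unfolding p[of 0] h by simp
    also have "\<dots> = Kc m0 lam0 * 5^(Suc (length f)) * hh (psi_seq f (wv lam0))"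
      unfolding Kc_def using False by simp
    finally show ?thesis .
  qed
qed

lemma pow_big: assumes "0 < y" "ln y / ln 5 < real k" shows "y < 5^k"
proof -
  have "ln y < real k * ln 5" using assms(2) by (simp add: divide_less_eq)
  also have "\<dots> = ln (5^k)" by (simp add: ln_realpow)
  finally show ?thesis using assms(1) by simp
qed

lemma Mbound: fixes y K :: real assumes "0 < y" "0 < K" "nat \<lceil>ln (2*y/(9*K)) / ln 5\<rceil> \<le> n"
  shows "y / (K * 5^(Suc n)) < 9/2"
proof -
  have "ln (2*y/(9*K)) / ln 5 \<le> real n" using assms(3) by linarith
  then have "ln (2*y/(9*K)) / ln 5 < real (Suc n)" by simp
  then have "2*y/(9*K) < 5^(Suc n)" by (intro pow_big) (use assms in auto)
  then show ?thesis using assms by (simp add: field_simps)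
qed

lemma E_set_iff: "e \<in> E_set \<longleftrightarrow> e = [] \<or> (\<exists>f. e = True # f)"
  unfolding E_set_def by (cases e) auto

lemma rho_decomp: assumes "lam0 \<in> {2,5,6}" "0 < x"
  shows "\<exists>c0. 0 \<le> c0 \<and> c0 \<le> 1 \<and> real (rho m0 lam0 x) = c0 +
      (\<Sum>n<nat \<lceil>ln (2*x/(9*Kc m0 lam0)) / ln 5\<rceil>. 2^n * GN (wv lam0) n (x / (Kc m0 lam0 * 5^(Suc n))))"
proof -
  define K where "K = Kc m0 lam0"
  define w where "w = wv lam0"
  define M where "M = nat \<lceil>ln (2*x/(9*K)) / ln 5\<rceil>"
  have K: "0 < K" unfolding K_def by (rule Kc_pos)
  have w: "0 \<le> w" "w \<le> 5" using wv_range[OF assms(1)] unfolding w_def by auto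
  define Sx where "Sx n = {f. length f = n \<and> psi_seq f w \<in> St (x / (K * 5^(Suc n)))}" for n
  define Z where "Z = {[]} \<inter> {e. lambda_e m0 lam0 e \<le> x}"
  have lc: "lambda_e m0 lam0 (True # f) = K * 5^(Suc (length f)) * hh (psi_seq f w)" for f
    unfolding K_def w_def by (rule lam_cons[OF assms(1)])
  have memS: "f \<in> Sx n \<longleftrightarrow> length f = n \<and> lambda_e m0 lam0 (True # f) \<le> x" for f n
  proof -
    have "hh (psi_seq f w) \<le> x / (K * 5^(Suc n)) \<longleftrightarrow> K * 5^(Suc n) * hh (psi_seq f w) \<le> x"
      using K by (simp add: pos_le_divide_eq mult.commute)
    then show ?thesis unfolding Sx_def St_def lc by auto
  qed
  have big: "\<not> lambda_e m0 lam0 (True # f) \<le> x" if "M \<le> length f" for f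
  proof -
    have "x / (K * 5^(Suc (length f))) < 9/2" using Mbound[OF assms(2) K] that unfolding M_def by blast
    then have "x < K * 5^(Suc (length f)) * (9/2)" using K by (simp add: divide_less_eq mult.commute)
    also have "\<dots> \<le> K * 5^(Suc (length f)) * hh (psi_seq f w)"
      by (rule mult_left_mono) (use hh_bounds K in auto)
    finally show ?thesis unfolding lc by simp
  qed
  have seteq: "{e \<in> E_set. lambda_e m0 lam0 e \<le> x} = Z \<union> (\<Union>n\<in>{..<M}. Cons True ` Sx n)"
  proof (intro set_eqI iffI)
    fix e assume e: "e \<in> {e \<in> E_set. lambda_e m0 lam0 e \<le> x}"
    then consider "e = []" | f where "e = True # f" using E_set_iff by blast
    then show "e \<in> Z \<union> (\<Union>n\<in>{..<M}. Cons True ` Sx n)"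
    proof cases
      case 1 then show ?thesis using e unfolding Z_def by auto
    next
      case (2 f)
      have lt: "length f < M" using big[of f] e 2 by force
      have "f \<in> Sx (length f)" using memS e 2 by auto
      then show ?thesis using lt 2 by blast
    qed
  next
    fix e assume "e \<in> Z \<union> (\<Union>n\<in>{..<M}. Cons True ` Sx n)"
    then show "e \<in> {e \<in> E_set. lambda_e m0 lam0 e \<le> x}"
      unfolding Z_def E_set_iff using memS by auto
  qed
  have finS: "finite (Sx n)" for n unfolding Sx_def by (rule A_finite)
  have cardS: "card (Cons True ` Sx n) = A w n (St (x / (K * 5^(Suc n))))" for n
    unfolding A_def Sx_def by (simp add: card_image)
  have fZ: "finite Z" unfolding Z_def by simp
  have "card ({e \<in> E_set. lambda_e m0 lam0 e \<le> x}) = card Z + card (\<Union>n\<in>{..<M}. Cons True ` Sx n)"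
    unfolding seteq by (rule card_Un_disjoint) (use fZ finS in \<open>auto simp: Z_def\<close>)
  also have "card (\<Union>n\<in>{..<M}. Cons True ` Sx n) = (\<Sum>n<M. card (Cons True ` Sx n))"
    by (rule card_UN_disjoint) (use finS in \<open>auto simp: Sx_def\<close>)
  finally have c: "rho m0 lam0 x = card Z + (\<Sum>n<M. A w n (St (x / (K * 5^(Suc n)))))"
    unfolding rho_def cardS by simp
  have cZ: "card Z \<le> 1" using card_mono[of "{[]}" Z] unfolding Z_def by auto
  have "real (A w n (St t)) = 2^n * GN w n t" for n t unfolding GN_def mu_def by simp
  then have "real (rho m0 lam0 x) = real (card Z) + (\<Sum>n<M. 2^n * GN w n (x / (K * 5^(Suc n))))"
    unfolding c by simp
  then show ?thesis using cZ unfolding M_def K_def w_def by (intro exI[of _ "real (card Z)"]) auto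
qed

definition pt :: "real \<Rightarrow> real \<Rightarrow> real \<Rightarrow> nat \<Rightarrow> real" where
  "pt w K s n = 2^n * GL w (exp s / (K * 5^(Suc n)))"
definition qt :: "real \<Rightarrow> real \<Rightarrow> real \<Rightarrow> nat \<Rightarrow> real" where
  "qt w K s n = (1/2)^(Suc n) * GL w (exp s * 5^n / K)"
definition PP :: "real \<Rightarrow> real \<Rightarrow> real \<Rightarrow> real" where "PP w K s = suminf (pt w K s)"
definition QQ :: "real \<Rightarrow> real \<Rightarrow> real \<Rightarrow> real" where "QQ w K s = suminf (qt w K s)"
definition gg :: "real \<Rightarrow> real \<Rightarrow> real \<Rightarrow> real" where
  "gg w K s = exp (- (ln 2 / ln 5) * s) * (PP w K s + QQ w K s)"

context
  fixes w K :: real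
  assumes w: "0 \<le> w" "w \<le> 5" and K: "0 < K"
begin

definition MM :: "real \<Rightarrow> nat" where "MM y = nat \<lceil>ln (2*y/(9*K)) / ln 5\<rceil>"

lemma pt_zero: "MM (exp s) \<le> n \<Longrightarrow> pt w K s n = 0"
  unfolding pt_def MM_def using GL_zero[OF w] Mbound[OF exp_gt_zero K] by simp

lemma pt_zero': "s \<le> s1 \<Longrightarrow> MM (exp s1) \<le> n \<Longrightarrow> pt w K s n = 0"
proof -
  assume a: "s \<le> s1" "MM (exp s1) \<le> n"
  have "exp s1 / (K * 5^(Suc n)) < 9/2" using Mbound[OF exp_gt_zero K] a(2) unfolding MM_def by blast
  moreover have "exp s / (K * 5^(Suc n)) \<le> exp s1 / (K * 5^(Suc n))"
    using a(1) K by (intro divide_right_mono) auto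
  ultimately show ?thesis unfolding pt_def using GL_zero[OF w] by simp
qed

lemma pt_summable: "summable (pt w K s)"
  by (rule summable_finite[of "{..<MM (exp s)}"]) (use pt_zero in auto)

lemma PP_fin: "s \<le> s1 \<Longrightarrow> PP w K s = (\<Sum>n<MM (exp s1). pt w K s n)"
  unfolding PP_def by (rule suminf_finite) (use pt_zero' in auto)

lemma PP_shift: "PP w K (s + ln 5) = GL w (exp s / K) + 2 * PP w K s"
proof -
  have e: "exp (s + ln 5) = exp s * 5" by (simp add: exp_add)
  have a: "pt w K (s + ln 5) (Suc n) = 2 * pt w K s n" for n
    unfolding pt_def e by (simp add: mult_ac)
  have b: "pt w K (s + ln 5) 0 = GL w (exp s / K)" unfolding pt_def e by simp
  have "(\<Sum>n. pt w K (s + ln 5) (Suc n)) = PP w K (s + ln 5) - pt w K (s + ln 5) 0"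
    unfolding PP_def by (rule suminf_split_head[OF pt_summable])
  moreover have "(\<Sum>n. pt w K (s + ln 5) (Suc n)) = 2 * PP w K s"
    unfolding a PP_def by (rule suminf_mult[OF pt_summable])
  ultimately show ?thesis using b by simp
qed

lemma qt_bnd: "\<bar>qt w K s n\<bar> \<le> 3 * (1/2)^(Suc n)"
  unfolding qt_def using GL_bnd[OF w] by (simp add: abs_mult mult.commute)

lemma qt_summable: "summable (qt w K s)"
proof -
  have "summable (\<lambda>n. 3 * (1/2::real)^(Suc n))" by simp
  then show ?thesis by (rule summable_comparison_test[rotated]) (use qt_bnd in auto)
qed

lemma QQ_bnd: "\<bar>QQ w K s\<bar> \<le> 3"
proof -
  have s3: "summable (\<lambda>n. 3 * (1/2::real)^(Suc n))" by simp
  have sa: "summable (\<lambda>n. \<bar>qt w K s n\<bar>)"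
    by (rule summable_comparison_test[OF _ s3]) (use qt_bnd in auto)
  have "\<bar>QQ w K s\<bar> \<le> (\<Sum>n. \<bar>qt w K s n\<bar>)" unfolding QQ_def by (rule summable_rabs[OF sa])
  also have "\<dots> \<le> (\<Sum>n. 3 * (1/2::real)^(Suc n))" by (rule suminf_le[OF _ sa s3]) (use qt_bnd in auto)
  also have "(\<Sum>n. 3 * (1/2::real)^(Suc n)) = (\<Sum>n. (3/2) * (1/2::real)^n)" by simp
  also have "\<dots> = 3/2 * (\<Sum>n. (1/2::real)^n)" by (rule suminf_mult) simp
  also have "\<dots> = 3" by (simp add: suminf_geometric)
  finally show ?thesis .
qed

lemma QQ_shift: "QQ w K (s + ln 5) = 2 * QQ w K s - GL w (exp s / K)"
proof -
  have e: "exp (s + ln 5) = exp s * 5" by (simp add: exp_add)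
  have a: "qt w K s (Suc n) = (1/2) * qt w K (s + ln 5) n" for n
    unfolding qt_def e by (simp add: mult_ac)
  have b: "qt w K s 0 = (1/2) * GL w (exp s / K)" unfolding qt_def by simp
  have "(\<Sum>n. qt w K s (Suc n)) = QQ w K s - qt w K s 0"
    unfolding QQ_def by (rule suminf_split_head[OF qt_summable])
  moreover have "(\<Sum>n. qt w K s (Suc n)) = (1/2) * QQ w K (s + ln 5)"
    unfolding a QQ_def by (rule suminf_mult[OF qt_summable])
  ultimately show ?thesis using b by simp
qed

lemma gg_periodic: "gg w K (s + ln 5) = gg w K s"
proof -
  have ex: "exp (- (ln 2 / ln 5) * (s + ln 5)) = exp (- (ln 2 / ln 5) * s) / 2"
  proof -
    have "- (ln 2 / ln 5) * (s + ln 5) = - (ln 2 / ln 5) * s + - ln 2" by (simp add: field_simps)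
    then have "exp (- (ln 2 / ln 5) * (s + ln 5)) = exp (- (ln 2 / ln 5) * s) * exp (- ln 2)"
      by (simp only: exp_add)
    also have "exp (- ln 2) = (1/2::real)" by (simp add: exp_minus)
    finally show ?thesis by simp
  qed
  show ?thesis unfolding gg_def ex PP_shift QQ_shift by (simp add: field_simps)
qed


lemma GL_cont_on: "continuous_on UNIV (GL w)"
  by (rule continuous_at_imp_continuous_on) (use GL_cont[OF w] in auto)

lemma GL_comp_cont: "continuous_on S f \<Longrightarrow> continuous_on S (\<lambda>s. GL w (f s))"
  by (rule continuous_on_compose2[OF GL_cont_on]) auto

lemma QQ_cont: "continuous_on UNIV (QQ w K)"
proof -
  have ul: "uniform_limit UNIV (\<lambda>n s. \<Sum>i<n. qt w K s i) (\<lambda>s. \<Sum>i. qt w K s i) sequentially"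
    by (rule Weierstrass_m_test[of UNIV "\<lambda>i s. qt w K s i" "\<lambda>i. 3 * (1/2)^(Suc i)"])
       (use qt_bnd in auto)
  have c: "continuous_on UNIV (\<lambda>s. \<Sum>i<n. qt w K s i)" for n
    unfolding qt_def using K by (intro continuous_intros GL_comp_cont) auto
  have "continuous_on UNIV (\<lambda>s. \<Sum>i. qt w K s i)"
    by (rule uniform_limit_theorem[OF always_eventually ul]) (use c in auto)
  then show ?thesis unfolding QQ_def by simp
qed

lemma PP_cont: "continuous_on UNIV (PP w K)"
proof (rule continuous_at_imp_continuous_on, intro ballI)
  fix s0 :: real
  have c: "continuous_on {..<s0+1} (\<lambda>s. \<Sum>n<MM (exp (s0+1)). pt w K s n)"
    unfolding pt_def using K by (intro continuous_intros GL_comp_cont) auto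
  have "continuous_on {..<s0+1} (PP w K)"
    by (rule continuous_on_cong[THEN iffD1, OF refl _ c]) (use PP_fin[of _ "s0+1"] in \<open>simp add: less_imp_le\<close>)
  then have "\<forall>x\<in>{..<s0+1}. isCont (PP w K) x" using continuous_on_eq_continuous_at[of "{..<s0+1}"] by auto
  then show "isCont (PP w K) s0" by simp
qed

lemma gg_cont: "continuous_on UNIV (gg w K)"
  unfolding gg_def by (intro continuous_intros PP_cont QQ_cont)

end

lemma asymp_aux: "((\<lambda>x::real. (a + b*ln x) / x powr (ln 2 / ln 5)) \<longlongrightarrow> 0) at_top"
  by real_asymp

lemma two_half: "(2::real)^n * (1/2)^n = 1"
  by (simp add: power_mult_distrib[symmetric])

theorem proposition5p3:
  fixes m0 :: int and lam0 :: real
  assumes "lam0 \<in> {2, 5, 6}"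
  shows "\<exists>g :: real \<Rightarrow> real. continuous_on UNIV g \<and> (\<forall>t. g (t + ln 5) = g t) \<and>
           ((\<lambda>x. real (rho m0 lam0 x) / x powr (ln 2 / ln 5) - g (ln x)) \<longlongrightarrow> 0) at_top"
proof -
  define w where "w = wv lam0"
  define K where "K = Kc m0 lam0"
  define \<alpha> where "\<alpha> = ln 2 / ln (5::real)"
  have w: "0 \<le> w" "w \<le> 5" using wv_range[OF assms] unfolding w_def by auto
  have K: "0 < K" unfolding K_def by (rule Kc_pos)
  define B where "B x = ((6 + 2 * ln (2/(9*K)) / ln 5) + (2 / ln 5) * ln x) / x powr \<alpha>" for x :: real
  have Blim: "(B \<longlongrightarrow> 0) at_top" unfolding B_def \<alpha>_def by (rule asymp_aux)
  have bound: "\<bar>real (rho m0 lam0 x) / x powr \<alpha> - gg w K (ln x)\<bar> \<le> B x" if x: "x \<ge> 9*K/2" for x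
  proof -
    have xpos: "0 < x" using x K by simp
    define M where "M = nat \<lceil>ln (2*x/(9*K)) / ln 5\<rceil>"
    define t where "t n = x / (K * 5^(Suc n))" for n
    obtain c0 where c0: "0 \<le> c0" "c0 \<le> 1"
      "real (rho m0 lam0 x) = c0 + (\<Sum>n<M. 2^n * GN w n (t n))"
      using rho_decomp[OF assms xpos, of m0] unfolding M_def t_def w_def K_def by blast
    have PPx: "PP w K (ln x) = (\<Sum>n<M. 2^n * GL w (t n))"
      using PP_fin[OF w K, of "ln x" "ln x"] xpos unfolding pt_def t_def M_def MM_def[OF w K] by simp
    have xa: "x powr \<alpha> > 0" using xpos by simp
    have ex: "exp (- \<alpha> * ln x) = 1 / x powr \<alpha>"
      using xpos by (simp add: powr_def exp_minus field_simps)
    have gx: "gg w K (ln x) = (PP w K (ln x) + QQ w K (ln x)) / x powr \<alpha>"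
      unfolding gg_def \<alpha>_def[symmetric] ex by simp
    have diff: "real (rho m0 lam0 x) / x powr \<alpha> - gg w K (ln x) =
       (c0 + (\<Sum>n<M. 2^n * (GN w n (t n) - GL w (t n))) - QQ w K (ln x)) / x powr \<alpha>"
      unfolding gx c0(3) PPx by (simp add: diff_divide_distrib sum_subtractf algebra_simps)
    have termb: "\<bar>2^n * (GN w n (t n) - GL w (t n))\<bar> \<le> 2" for n
    proof -
      have "\<bar>2^n * (GN w n (t n) - GL w (t n))\<bar> = 2^n * \<bar>GN w n (t n) - GL w (t n)\<bar>"
        by (simp add: abs_mult)
      also have "\<dots> \<le> 2^n * (2 * (1/2)^n)" by (rule mult_left_mono[OF GN_approx[OF w]]) simp
      also have "\<dots> = 2" using two_half[of n] by simp
      finally show ?thesis .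
    qed
    have sumb: "\<bar>\<Sum>n<M. 2^n * (GN w n (t n) - GL w (t n))\<bar> \<le> 2 * real M"
    proof -
      have "\<bar>\<Sum>n<M. 2^n * (GN w n (t n) - GL w (t n))\<bar> \<le> (\<Sum>n<M. \<bar>2^n * (GN w n (t n) - GL w (t n))\<bar>)"
        by (rule sum_abs)
      also have "\<dots> \<le> (\<Sum>n<M. 2)" by (rule sum_mono) (rule termb)
      finally show ?thesis by simp
    qed
    define L where "L = ln (2*x/(9*K)) / ln 5"
    have L0: "0 \<le> L" unfolding L_def using x K by (simp add: field_simps)
    have MLb: "real M \<le> L + 1" unfolding M_def L_def[symmetric]
      using ceiling_correct[of L] L0 by simp
    have Lx: "L = ln (2/(9*K)) / ln 5 + ln x / ln 5"
    proof -
      have e: "2*x/(9*K) = x * (2/(9*K))" by simp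
      have "ln (x * (2/(9*K))) = ln x + ln (2/(9*K))" by (rule ln_mult_pos) (use xpos K in auto)
      then have "ln (2*x/(9*K)) = ln x + ln (2/(9*K))" unfolding e .
      then show ?thesis unfolding L_def by (simp add: add_divide_distrib)
    qed
    have "\<bar>c0 + (\<Sum>n<M. 2^n * (GN w n (t n) - GL w (t n))) - QQ w K (ln x)\<bar> \<le> 1 + 2 * real M + 3"
      using c0(1,2) sumb QQ_bnd[OF w K, of "ln x"] by linarith
    also have "\<dots> \<le> (6 + 2 * ln (2/(9*K)) / ln 5) + (2 / ln 5) * ln x"
      using MLb unfolding Lx by (simp add: field_simps)
    finally have num: "\<bar>c0 + (\<Sum>n<M. 2^n * (GN w n (t n) - GL w (t n))) - QQ w K (ln x)\<bar>
        \<le> (6 + 2 * ln (2/(9*K)) / ln 5) + (2 / ln 5) * ln x" .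
    show ?thesis unfolding diff B_def abs_divide using xa num
      by (simp add: divide_right_mono)
  qed
  have ev: "eventually (\<lambda>x. norm (real (rho m0 lam0 x) / x powr \<alpha> - gg w K (ln x)) \<le> B x) at_top"
    using eventually_ge_at_top[of "9*K/2"] by eventually_elim (use bound in auto)
  have lim: "((\<lambda>x. real (rho m0 lam0 x) / x powr \<alpha> - gg w K (ln x)) \<longlongrightarrow> 0) at_top"
    by (rule Lim_null_comparison[OF ev Blim])
  show ?thesis
    apply (rule exI[of _ "gg w K"])
    using gg_cont[OF w K] gg_periodic[OF w K] lim unfolding \<alpha>_def by auto
qed

end
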